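(* Let $m,K$ be positive integers and $b_1,\dots,b_{3m}$ positive integers with $K/4<b_i<K/2$ and $\sum_i b_i=mK$. Set $W=100(5m)^2K$, $a_i=b_i+W$, $A=\{a_1,\dots,a_{3m}\}$, $L=3W+K$, $\epsilon=1/(400(5m)^2)$, $h=\lfloor 4\epsilon L\rfloor$, $H=L+h$. Let $X$ be the multiset consisting of $a_1,\dots,a_{3m}$, $m$ copies of $-H$ and $m$ copies of $h$, and let $T_{\min}$ be a minimum-cost addition tree over $X$. Then $C(T_{\min})\ge m(H+h)$. Moreover, $C(T_{\min})=m(H+h)$ if and only if $(A,L)$ is a positive instance of 3-PARTITION.
   Context: An addition tree over a multiset $X$ is a full binary tree whose leaves are labeled by the elements of $X$ (each used once), each internal node having value equal to the sum of its children's values; its cost $C(T)$ is the sum of the absolute values of the values of its internal nodes, and $T_{\min}$ minimizes $C$. $(A,L)$ is a positive instance of 3-PARTITION if $A$ can be partitioned into $m$ disjoint submultisets each summing to $L$. *)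

theory Defs
  imports Complex_Main "HOL-Library.Multiset"
begin

datatype atree = Leaf int | Node atree atree

fun leaves :: "atree \<Rightarrow> int multiset" where
  "leaves (Leaf x) = {#x#}"
| "leaves (Node l r) = leaves l + leaves r"

fun tval :: "atree \<Rightarrow> int" where
  "tval (Leaf x) = x"
| "tval (Node l r) = tval l + tval r"

fun cost :: "atree \<Rightarrow> int" where
  "cost (Leaf x) = 0"
| "cost (Node l r) = \<bar>tval l + tval r\<bar> + cost l + cost r"

definition addition_tree_over :: "atree \<Rightarrow> int multiset \<Rightarrow> bool" where
  "addition_tree_over T X \<longleftrightarrow> leaves T = X"

definition min_cost_tree :: "atree \<Rightarrow> int multiset \<Rightarrow> bool" where
  "min_cost_tree T X \<longleftrightarrow> addition_tree_over T X \<and>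
     (\<forall>T'. addition_tree_over T' X \<longrightarrow> cost T \<le> cost T')"

definition three_partition_pos :: "int multiset \<Rightarrow> nat \<Rightarrow> int \<Rightarrow> bool" where
  "three_partition_pos A m L \<longleftrightarrow>
     (\<exists>P :: int multiset multiset. size P = m \<and> sum_mset P = A \<and>
        (\<forall>B\<in>#P. sum_mset B = L))"

end

theory Submission imports Defs begin

definition psi :: "int \<Rightarrow> int" where
  "psi w = (if w \<ge> 3 then -4 - w else if w \<le> -4 then 1 else if w = -3 then 6
            else if w = -2 then 2 else if w = 2 then -4 else 0)"

lemma int_cases8: "(u::int) \<ge> 3 \<or> u \<le> -4 \<or> u = -3 \<or> u = -2 \<or> u = -1 \<or> u = 0 \<or> u = 1 \<or> u = 2"
  by arith

lemma psi_ineq: "psi u + psi v \<le> psi (u+v) + 2 * \<bar>u+v\<bar>"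
  using int_cases8[of u] int_cases8[of v] int_cases8[of "u+v"]
  apply (elim disjE)
  apply (simp_all add: psi_def)
  done

lemma psi_tight:
  assumes "psi u + psi v = psi (u+v) + 2 * \<bar>u+v\<bar>"
  shows "(u=1 \<and> v=1) \<or> (u=-3 \<and> v=2) \<or> (u=2 \<and> v=-3) \<or> (u=-3 \<and> v=1) \<or> (u=1 \<and> v=-3)
    \<or> (u=-2 \<and> v=1) \<or> (u=1 \<and> v=-2) \<or> (u=-1 \<and> v=1) \<or> (u=1 \<and> v=-1) \<or> (u=0 \<and> v=0)"
  using int_cases8[of u] int_cases8[of v] int_cases8[of "u+v"] assms
  apply (elim disjE)
  apply (simp_all add: psi_def)
  done

lemma tval_leaves: "tval T = sum_mset (leaves T)" by (induction T) auto
lemma leaves_ne: "leaves T \<noteq> {#}" by (induction T) auto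

lemma absW_pos: "(W::int) > 0 \<Longrightarrow> 2*\<bar>f\<bar> \<le> W \<Longrightarrow> w \<ge> 1 \<Longrightarrow> \<bar>W*w + f\<bar> = W*w + f"
proof -
  assume a: "W > 0" "2*\<bar>f\<bar> \<le> W" "w \<ge> 1"
  then have "W*w \<ge> W*1" by (intro mult_left_mono) auto
  moreover have "-f \<le> \<bar>f\<bar>" by simp
  ultimately have "W*w + f \<ge> 0" using a by linarith
  then show ?thesis by simp
qed

lemma absW_neg: "(W::int) > 0 \<Longrightarrow> 2*\<bar>f\<bar> \<le> W \<Longrightarrow> w \<le> -1 \<Longrightarrow> \<bar>W*w + f\<bar> = -(W*w) - f"
proof -
  assume a: "W > 0" "2*\<bar>f\<bar> \<le> W" "w \<le> -1"
  then have "W*w \<le> W*(-1)" by (intro mult_left_mono) auto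
  moreover have "f \<le> \<bar>f\<bar>" by simp
  ultimately have "W*w + f \<le> 0" using a by linarith
  then show ?thesis by simp
qed

lemma lin1: fixes a b c d e x :: int shows "a \<le> b - c + d + e \<Longrightarrow> x = -c \<Longrightarrow> a \<le> b + x + d + e"
  by linarith

locale P3 =
  fixes M K W h H :: int and X :: "int multiset"
  assumes M1: "M \<ge> 1" and K1: "K \<ge> 1" and Wdef: "W = 2500 * M^2 * K"
    and h3: "3 * K \<le> h" and h4: "h \<le> 4 * K" and Hdef: "H = 3 * W + K + h"
    and Xel: "\<forall>x\<in>#X. x = -H \<or> x = h \<or> (K < 4 * (x - W) \<and> 2 * (x - W) < K)"
    and XH: "int (count X (-H)) = M" and Xh: "int (count X h) = M" and Xs: "int (size X) = 5 * M"
begin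

definition isA :: "int \<Rightarrow> bool" where "isA x \<longleftrightarrow> x \<noteq> -H \<and> x \<noteq> h"
definition qq :: "int multiset \<Rightarrow> int" where "qq S = int (count S (-H))"
definition rr :: "int multiset \<Rightarrow> int" where "rr S = int (count S h)"
definition pp :: "int multiset \<Rightarrow> int" where "pp S = int (size (filter_mset isA S))"
definition nn :: "int multiset \<Rightarrow> int" where "nn S = int (size S)"
definition BB :: "int multiset \<Rightarrow> int" where "BB S = sum_mset S + qq S * H - rr S * h - pp S * W"
definition ff :: "int multiset \<Rightarrow> int" where "ff S = BB S - qq S * (K + h) + rr S * h"
definition ww :: "int multiset \<Rightarrow> int" where "ww S = pp S - 3 * qq S"

lemma hpos: "h > 0" using h3 K1 by simp
lemma Wpos: "W > 0" using Wdef M1 K1 by simp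
lemma Hpos: "H > 0" using Hdef Wpos hpos K1 by simp
lemma Hh: "-H \<noteq> h" using Hpos hpos by simp

lemma sum_eq: "sum_mset S = W * ww S + ff S"
proof -
  have e: "qq S * H = qq S * (3*W+K+h)" using Hdef by simp
  show ?thesis unfolding ww_def ff_def BB_def using e by (simp add: algebra_simps)
qed

lemma nn_eq: "nn S = pp S + qq S + rr S"
proof (induction S)
  case empty then show ?case by (simp add: nn_def pp_def qq_def rr_def)
next
  case (add x S)
  then show ?case using Hh by (auto simp: nn_def pp_def qq_def rr_def isA_def)
qed

lemma add_counts:
  "qq (S1 + S2) = qq S1 + qq S2" "rr (S1 + S2) = rr S1 + rr S2" "pp (S1 + S2) = pp S1 + pp S2"
  "nn (S1 + S2) = nn S1 + nn S2" "BB (S1 + S2) = BB S1 + BB S2" "ff (S1 + S2) = ff S1 + ff S2"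
  "ww (S1 + S2) = ww S1 + ww S2"
  by (simp_all add: qq_def rr_def pp_def nn_def BB_def ff_def ww_def algebra_simps)

lemma BB_add: "BB (add_mset x S) = BB S + (if isA x then x - W else 0)"
  "pp (add_mset x S) = pp S + (if isA x then 1 else 0)"
  using Hh by (auto simp: BB_def qq_def rr_def pp_def isA_def algebra_simps)

definition valid :: "int \<Rightarrow> bool" where
  "valid x \<longleftrightarrow> x = -H \<or> x = h \<or> (K < 4 * (x - W) \<and> 2 * (x - W) < K)"

lemma valid_bounds:
  assumes "\<forall>x\<in>#S. valid x"
  shows "pp S * K + pp S \<le> 4 * BB S \<and> 2 * BB S \<le> pp S * K - pp S \<and> pp S \<ge> 0"
  using assms
proof (induction S)
  case empty then show ?case by (simp add: BB_def pp_def qq_def rr_def)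
next
  case (add x S)
  then have IH: "pp S * K + pp S \<le> 4 * BB S \<and> 2 * BB S \<le> pp S * K - pp S \<and> pp S \<ge> 0" by simp
  show ?case
  proof (cases "isA x")
    case True
    with add.prems have "K < 4 * (x - W) \<and> 2 * (x - W) < K" by (auto simp: valid_def isA_def)
    then show ?thesis using IH True by (simp add: BB_add algebra_simps)
  next
    case False
    then show ?thesis using IH by (simp add: BB_add)
  qed
qed

lemma sub_valid: "S \<subseteq># X \<Longrightarrow> \<forall>x\<in>#S. valid x"
  using Xel unfolding valid_def by (meson mset_subset_eqD)

lemma sub_bounds:
  assumes "S \<subseteq># X"
  shows "pp S * K + pp S \<le> 4 * BB S" "2 * BB S \<le> pp S * K - pp S" "pp S \<ge> 0"
    "qq S \<ge> 0" "rr S \<ge> 0" "qq S \<le> M" "rr S \<le> M" "nn S \<le> 5 * M" "pp S \<le> 3 * M"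
proof -
  show "pp S * K + pp S \<le> 4 * BB S" "2 * BB S \<le> pp S * K - pp S" "pp S \<ge> 0"
    using valid_bounds[OF sub_valid[OF assms]] by auto
  show "qq S \<ge> 0" "rr S \<ge> 0" by (auto simp: qq_def rr_def)
  show "qq S \<le> M" using XH assms unfolding qq_def by (metis mset_subset_eq_count of_nat_le_iff)
  show "rr S \<le> M" using Xh assms unfolding rr_def by (metis mset_subset_eq_count of_nat_le_iff)
  show "nn S \<le> 5 * M" using Xs assms unfolding nn_def by (metis size_mset_mono of_nat_le_iff)
  have "pp X = 3 * M" using nn_eq[of X] XH Xh Xs by (simp add: nn_def qq_def rr_def)
  moreover have "pp S \<le> pp X" unfolding pp_def
    by (simp add: assms multiset_filter_mono size_mset_mono)
  ultimately show "pp S \<le> 3 * M" by simp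
qed


definition st :: "int \<Rightarrow> int \<Rightarrow> int \<Rightarrow> bool" where
  "st p q r \<longleftrightarrow> (p=1 \<and> q=0 \<and> r=0) \<or> (p=0 \<and> q=1 \<and> r=0) \<or> (p=2 \<and> q=0 \<and> r=0)
     \<or> (p=1 \<and> q=1 \<and> r=0) \<or> (p=2 \<and> q=1 \<and> r=0) \<or> p = 3*q"

definition G2a :: "int \<Rightarrow> int \<Rightarrow> int \<Rightarrow> int \<Rightarrow> int \<Rightarrow> int \<Rightarrow> int" where
  "G2a p q r B e n = (if (p=1 \<and> q=0 \<and> r=0) \<or> (p=0 \<and> q=1 \<and> r=0) then 0
     else if p=2 \<and> q=0 \<and> r=0 then 2*B
     else if p=1 \<and> q=1 \<and> r=0 then 2*(K+h-B)
     else if p=2 \<and> q=1 \<and> r=0 then 2*(K+h)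
     else if p = 3*q then 2*(q*(2*K+2*h) - B) + 2*e
     else W - 2*(K+h)*n^2)"

lemma G2a_weird: assumes "\<not> st p q r" shows "G2a p q r B e n = W - 2*(K+h)*n^2"
proof -
  have c: "\<not>((p=1 \<and> q=0 \<and> r=0) \<or> (p=0 \<and> q=1 \<and> r=0))" "\<not>(p=2 \<and> q=0 \<and> r=0)" "\<not>(p=1 \<and> q=1 \<and> r=0)"
    "\<not>(p=2 \<and> q=1 \<and> r=0)" "\<not> p = 3*q" using assms unfolding st_def by blast+
  show ?thesis unfolding G2a_def by (simp only: if_not_P[OF c(1)] if_not_P[OF c(2)] if_not_P[OF c(3)] if_not_P[OF c(4)] if_not_P[OF c(5)])
qed

lemma G2a_zero: assumes "p = 3*q" shows "G2a p q r B e n = 2*(q*(2*K+2*h) - B) + 2*e"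
proof -
  have c: "\<not>((p=1 \<and> q=0 \<and> r=0) \<or> (p=0 \<and> q=1 \<and> r=0))" "\<not>(p=2 \<and> q=0 \<and> r=0)" "\<not>(p=1 \<and> q=1 \<and> r=0)"
    "\<not>(p=2 \<and> q=1 \<and> r=0)" using assms by auto
  show ?thesis unfolding G2a_def by (simp only: if_not_P[OF c(1)] if_not_P[OF c(2)] if_not_P[OF c(3)] if_not_P[OF c(4)] if_P[OF assms])
qed

lemma sh: "st p q r \<Longrightarrow> w = p - 3*q \<Longrightarrow>
        (w = 1 \<longrightarrow> p=1 \<and> q=0 \<and> r=0) \<and> (w = -3 \<longrightarrow> p=0 \<and> q=1 \<and> r=0) \<and> (w = 2 \<longrightarrow> p=2 \<and> q=0 \<and> r=0)
        \<and> (w = -2 \<longrightarrow> p=1 \<and> q=1 \<and> r=0) \<and> (w = -1 \<longrightarrow> p=2 \<and> q=1 \<and> r=0)"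
  unfolding st_def apply (elim disjE conjE) apply simp_all done

lemma tight_closure:
  assumes "(u=1 \<and> v=1) \<or> (u=-3 \<and> v=2) \<or> (u=2 \<and> v=-3) \<or> (u=-3 \<and> v=1) \<or> (u=1 \<and> v=-3)
    \<or> (u=-2 \<and> v=1) \<or> (u=1 \<and> v=-2) \<or> (u=-1 \<and> v=1) \<or> (u=1 \<and> v=-1) \<or> (u=0 \<and> v=0)"
    and uv: "u = p1 - 3*q1" "v = p2 - 3*q2" and s: "st p1 q1 r1" "st p2 q2 r2"
  shows "st (p1+p2) (q1+q2) (r1+r2)"
proof -
  note a = sh[OF s(1) uv(1)] and b = sh[OF s(2) uv(2)]
  from assms(1) show ?thesis
  proof (elim disjE)
    assume "u=0 \<and> v=0" then show ?thesis using uv unfolding st_def by simp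
  qed (use a b in \<open>simp add: st_def\<close>)+
qed

lemma tight_st:
  fixes p1 q1 r1 B1 e1 p2 q2 r2 B2 e2 e n n1 n2 :: int
  defines "f \<equiv> (B1+B2) - (q1+q2)*(K+h) + (r1+r2)*h"
  assumes tp: "(u=1 \<and> v=1) \<or> (u=-3 \<and> v=2) \<or> (u=2 \<and> v=-3) \<or> (u=-3 \<and> v=1) \<or> (u=1 \<and> v=-3)
    \<or> (u=-2 \<and> v=1) \<or> (u=1 \<and> v=-2) \<or> (u=-1 \<and> v=1) \<or> (u=1 \<and> v=-1) \<or> (u=0 \<and> v=0)"
    and uv: "u = p1 - 3*q1" "v = p2 - 3*q2" and st1: "st p1 q1 r1" and st2: "st p2 q2 r2"
    and b1: "p1*K + p1 \<le> 4*B1" "2*B1 \<le> p1*K - p1" and b2: "p2*K + p2 \<le> 4*B2" "2*B2 \<le> p2*K - p2"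
    and ee: "e1 \<in> {0,1}" "e2 \<in> {0,1}" "e \<in> {0,1}"
    and E1: "p1+p2 = 3 \<and> q1+q2 = 1 \<and> r1+r2 = 0 \<Longrightarrow> e = 0"
    and E2: "p1 = 3*q1 \<Longrightarrow> p2 = 3*q2 \<Longrightarrow> f = 0 \<Longrightarrow> e1 = 0 \<Longrightarrow> e2 = 0 \<Longrightarrow> e = 0"
    and fW: "2*\<bar>f\<bar> \<le> W"
  shows "G2a (p1+p2) (q1+q2) (r1+r2) (B1+B2) e n \<le>
     2*\<bar>W*(u+v) + f\<bar> - 2*W*\<bar>u+v\<bar> + G2a p1 q1 r1 B1 e1 n1 + G2a p2 q2 r2 B2 e2 n2"
proof -
  have KK: "K \<ge> 1" "3*K \<le> h" using K1 h3 by auto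
  have W0: "W > 0" using Wpos .
  consider "u=0 \<and> v=0" | "\<not>(u=0 \<and> v=0)" by blast
  then show ?thesis
  proof cases
    case 1
    then have z: "p1 = 3*q1" "p2 = 3*q2" using st1 st2 uv unfolding st_def by auto
    have g1: "G2a p1 q1 r1 B1 e1 n1 = 2*(q1*(2*K+2*h) - B1) + 2*e1"
      using z unfolding G2a_def by auto
    have g2: "G2a p2 q2 r2 B2 e2 n2 = 2*(q2*(2*K+2*h) - B2) + 2*e2"
      using z unfolding G2a_def by auto
    have g: "G2a (p1+p2) (q1+q2) (r1+r2) (B1+B2) e n = 2*((q1+q2)*(2*K+2*h) - (B1+B2)) + 2*e"
      using z unfolding G2a_def by auto
    have d: "(q1+q2)*(2*K+2*h) = q1*(2*K+2*h) + q2*(2*K+2*h)" by (simp add: distrib_right)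
    have "e \<le> e1 + e2 + \<bar>f\<bar>"
    proof (cases "f = 0 \<and> e1 = 0 \<and> e2 = 0")
      case True then show ?thesis using E2 z ee by auto
    next
      case False then show ?thesis using ee by auto
    qed
    moreover have "\<bar>W*(u+v) + f\<bar> = \<bar>f\<bar>" "2*W*\<bar>u+v\<bar> = 0" using 1 by simp_all
    moreover have "G2a (p1+p2) (q1+q2) (r1+r2) (B1+B2) e n = G2a p1 q1 r1 B1 e1 n1 + G2a p2 q2 r2 B2 e2 n2 + 2*(e - e1 - e2)"
      unfolding g g1 g2 d by (simp add: algebra_simps)
    ultimately show ?thesis by (smt (verit))
  next
    case 2
    with tp have tp2: "(u=1 \<and> v=1) \<or> (u=-3 \<and> v=2) \<or> (u=2 \<and> v=-3) \<or> (u=-3 \<and> v=1) \<or> (u=1 \<and> v=-3)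
    \<or> (u=-2 \<and> v=1) \<or> (u=1 \<and> v=-2) \<or> (u=-1 \<and> v=1) \<or> (u=1 \<and> v=-1)" by blast
    note s1 = sh[OF st1 uv(1)] and s2 = sh[OF st2 uv(2)]
    from tp2 show ?thesis
    proof (elim disjE)
      assume a: "u=1 \<and> v=1"
      then have pv: "p1=1" "q1=0" "r1=0" "p2=1" "q2=0" "r2=0" using s1 s2 by auto
      have A: "\<bar>W*(u+v) + f\<bar> = (W*(u+v)) + f"
        using absW_pos[OF W0 fW, of "u+v"] a by simp
      have uvv: "u+v = 2" using a by simp
      have A2: "\<bar>W*2 + f\<bar> = W*2 + f" using A uvv by simp
      have G: "G2a (p1+p2) (q1+q2) (r1+r2) (B1+B2) e n = G2a 2 0 0 (B1+B2) e n"
        "G2a p1 q1 r1 B1 e1 n1 = G2a 1 0 0 B1 e1 n1" "G2a p2 q2 r2 B2 e2 n2 = G2a 1 0 0 B2 e2 n2"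
        using pv by simp_all
      have fv: "f = B1 + B2 - 0*(K+h) + 0*h" using pv unfolding f_def by simp
      have bb: "1*K + 1 \<le> 4*B1" "2*B1 \<le> 1*K - 1" "1*K + 1 \<le> 4*B2" "2*B2 \<le> 1*K - 1"
        using b1 b2 pv by simp_all
      show ?thesis unfolding G uvv unfolding A2 using fv bb KK ee by (simp add: G2a_def)
    next
      assume a: "u=-3 \<and> v=2"
      then have pv: "p1=0" "q1=1" "r1=0" "p2=2" "q2=0" "r2=0" using s1 s2 by auto
      have A: "\<bar>W*(u+v) + f\<bar> = -(W*(u+v)) - f"
        using absW_neg[OF W0 fW, of "u+v"] a by simp
      have uvv: "u+v = -1" using a by simp
      have A2: "\<bar>W*(-1) + f\<bar> = -(W*(-1)) - f" using A uvv by simp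
      have G: "G2a (p1+p2) (q1+q2) (r1+r2) (B1+B2) e n = G2a 2 1 0 (B1+B2) e n"
        "G2a p1 q1 r1 B1 e1 n1 = G2a 0 1 0 B1 e1 n1" "G2a p2 q2 r2 B2 e2 n2 = G2a 2 0 0 B2 e2 n2"
        using pv by simp_all
      have fv: "f = B1 + B2 - 1*(K+h) + 0*h" using pv unfolding f_def by simp
      have bb: "0*K + 0 \<le> 4*B1" "2*B1 \<le> 0*K - 0" "2*K + 2 \<le> 4*B2" "2*B2 \<le> 2*K - 2"
        using b1 b2 pv by simp_all
      show ?thesis unfolding G uvv unfolding A2 using fv bb KK ee by (simp add: G2a_def)
    next
      assume a: "u=2 \<and> v=-3"
      then have pv: "p1=2" "q1=0" "r1=0" "p2=0" "q2=1" "r2=0" using s1 s2 by auto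
      have A: "\<bar>W*(u+v) + f\<bar> = -(W*(u+v)) - f"
        using absW_neg[OF W0 fW, of "u+v"] a by simp
      have uvv: "u+v = -1" using a by simp
      have A2: "\<bar>W*(-1) + f\<bar> = -(W*(-1)) - f" using A uvv by simp
      have G: "G2a (p1+p2) (q1+q2) (r1+r2) (B1+B2) e n = G2a 2 1 0 (B1+B2) e n"
        "G2a p1 q1 r1 B1 e1 n1 = G2a 2 0 0 B1 e1 n1" "G2a p2 q2 r2 B2 e2 n2 = G2a 0 1 0 B2 e2 n2"
        using pv by simp_all
      have fv: "f = B1 + B2 - 1*(K+h) + 0*h" using pv unfolding f_def by simp
      have bb: "2*K + 2 \<le> 4*B1" "2*B1 \<le> 2*K - 2" "0*K + 0 \<le> 4*B2" "2*B2 \<le> 0*K - 0"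
        using b1 b2 pv by simp_all
      show ?thesis unfolding G uvv unfolding A2 using fv bb KK ee by (simp add: G2a_def)
    next
      assume a: "u=-3 \<and> v=1"
      then have pv: "p1=0" "q1=1" "r1=0" "p2=1" "q2=0" "r2=0" using s1 s2 by auto
      have A: "\<bar>W*(u+v) + f\<bar> = -(W*(u+v)) - f"
        using absW_neg[OF W0 fW, of "u+v"] a by simp
      have uvv: "u+v = -2" using a by simp
      have A2: "\<bar>W*(-2) + f\<bar> = -(W*(-2)) - f" using A uvv by simp
      have G: "G2a (p1+p2) (q1+q2) (r1+r2) (B1+B2) e n = G2a 1 1 0 (B1+B2) e n"
        "G2a p1 q1 r1 B1 e1 n1 = G2a 0 1 0 B1 e1 n1" "G2a p2 q2 r2 B2 e2 n2 = G2a 1 0 0 B2 e2 n2"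
        using pv by simp_all
      have fv: "f = B1 + B2 - 1*(K+h) + 0*h" using pv unfolding f_def by simp
      have bb: "0*K + 0 \<le> 4*B1" "2*B1 \<le> 0*K - 0" "1*K + 1 \<le> 4*B2" "2*B2 \<le> 1*K - 1"
        using b1 b2 pv by simp_all
      show ?thesis unfolding G uvv unfolding A2 using fv bb KK ee by (simp add: G2a_def)
    next
      assume a: "u=1 \<and> v=-3"
      then have pv: "p1=1" "q1=0" "r1=0" "p2=0" "q2=1" "r2=0" using s1 s2 by auto
      have A: "\<bar>W*(u+v) + f\<bar> = -(W*(u+v)) - f"
        using absW_neg[OF W0 fW, of "u+v"] a by simp
      have uvv: "u+v = -2" using a by simp
      have A2: "\<bar>W*(-2) + f\<bar> = -(W*(-2)) - f" using A uvv by simp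
      have G: "G2a (p1+p2) (q1+q2) (r1+r2) (B1+B2) e n = G2a 1 1 0 (B1+B2) e n"
        "G2a p1 q1 r1 B1 e1 n1 = G2a 1 0 0 B1 e1 n1" "G2a p2 q2 r2 B2 e2 n2 = G2a 0 1 0 B2 e2 n2"
        using pv by simp_all
      have fv: "f = B1 + B2 - 1*(K+h) + 0*h" using pv unfolding f_def by simp
      have bb: "1*K + 1 \<le> 4*B1" "2*B1 \<le> 1*K - 1" "0*K + 0 \<le> 4*B2" "2*B2 \<le> 0*K - 0"
        using b1 b2 pv by simp_all
      show ?thesis unfolding G uvv unfolding A2 using fv bb KK ee by (simp add: G2a_def)
    next
      assume a: "u=-2 \<and> v=1"
      then have pv: "p1=1" "q1=1" "r1=0" "p2=1" "q2=0" "r2=0" using s1 s2 by auto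
      have A: "\<bar>W*(u+v) + f\<bar> = -(W*(u+v)) - f"
        using absW_neg[OF W0 fW, of "u+v"] a by simp
      have uvv: "u+v = -1" using a by simp
      have A2: "\<bar>W*(-1) + f\<bar> = -(W*(-1)) - f" using A uvv by simp
      have G: "G2a (p1+p2) (q1+q2) (r1+r2) (B1+B2) e n = G2a 2 1 0 (B1+B2) e n"
        "G2a p1 q1 r1 B1 e1 n1 = G2a 1 1 0 B1 e1 n1" "G2a p2 q2 r2 B2 e2 n2 = G2a 1 0 0 B2 e2 n2"
        using pv by simp_all
      have fv: "f = B1 + B2 - 1*(K+h) + 0*h" using pv unfolding f_def by simp
      have bb: "1*K + 1 \<le> 4*B1" "2*B1 \<le> 1*K - 1" "1*K + 1 \<le> 4*B2" "2*B2 \<le> 1*K - 1"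
        using b1 b2 pv by simp_all
      show ?thesis unfolding G uvv unfolding A2 using fv bb KK ee by (simp add: G2a_def)
    next
      assume a: "u=1 \<and> v=-2"
      then have pv: "p1=1" "q1=0" "r1=0" "p2=1" "q2=1" "r2=0" using s1 s2 by auto
      have A: "\<bar>W*(u+v) + f\<bar> = -(W*(u+v)) - f"
        using absW_neg[OF W0 fW, of "u+v"] a by simp
      have uvv: "u+v = -1" using a by simp
      have A2: "\<bar>W*(-1) + f\<bar> = -(W*(-1)) - f" using A uvv by simp
      have G: "G2a (p1+p2) (q1+q2) (r1+r2) (B1+B2) e n = G2a 2 1 0 (B1+B2) e n"
        "G2a p1 q1 r1 B1 e1 n1 = G2a 1 0 0 B1 e1 n1" "G2a p2 q2 r2 B2 e2 n2 = G2a 1 1 0 B2 e2 n2"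
        using pv by simp_all
      have fv: "f = B1 + B2 - 1*(K+h) + 0*h" using pv unfolding f_def by simp
      have bb: "1*K + 1 \<le> 4*B1" "2*B1 \<le> 1*K - 1" "1*K + 1 \<le> 4*B2" "2*B2 \<le> 1*K - 1"
        using b1 b2 pv by simp_all
      show ?thesis unfolding G uvv unfolding A2 using fv bb KK ee by (simp add: G2a_def)
    next
      assume a: "u=-1 \<and> v=1"
      then have pv: "p1=2" "q1=1" "r1=0" "p2=1" "q2=0" "r2=0" using s1 s2 by auto
      have uvv: "u+v = 0" using a by simp
      have G: "G2a (p1+p2) (q1+q2) (r1+r2) (B1+B2) e n = G2a 3 1 0 (B1+B2) e n"
        "G2a p1 q1 r1 B1 e1 n1 = G2a 2 1 0 B1 e1 n1" "G2a p2 q2 r2 B2 e2 n2 = G2a 1 0 0 B2 e2 n2"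
        using pv by simp_all
      have fv: "f = B1 + B2 - 1*(K+h) + 0*h" using pv unfolding f_def by simp
      have bb: "2*K + 2 \<le> 4*B1" "2*B1 \<le> 2*K - 2" "1*K + 1 \<le> 4*B2" "2*B2 \<le> 1*K - 1"
        using b1 b2 pv by simp_all
      have e0: "(3::int) = 3 \<and> 1 = 1 \<and> 0 = 0 \<Longrightarrow> e = 0" using E1 pv by simp
      have fv': "f = B1 + B2 - K - h" using fv by simp
      have bb': "2*B1 \<le> 2*K - 2" "2*B2 \<le> 2*K - 2" using bb KK by linarith+
      have fneg: "f < 0" using fv' bb' KK by linarith
      have A2: "\<bar>W*0 + f\<bar> = -(W*0) - f" using fneg by simp
      have e00: "e = 0" using e0 by simp
      have GG: "G2a 3 1 0 (B1+B2) e n = 2*(1*(2*K+2*h) - (B1+B2)) + 2*e"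
        "G2a 2 1 0 B1 e1 n1 = 2*(K+h)" "G2a 1 0 0 B2 e2 n2 = 0" "G2a 2 1 0 B2 e2 n2 = 2*(K+h)" "G2a 1 0 0 B1 e1 n1 = 0"
        by (simp_all add: G2a_def)
      have fin: "2*\<bar>W*0 + f\<bar> - 2*W*\<bar>0::int\<bar> = -2*f" using fneg by simp
      show ?thesis unfolding G uvv GG using fin fv' e00 by smt
    next
      assume a: "u=1 \<and> v=-1"
      then have pv: "p1=1" "q1=0" "r1=0" "p2=2" "q2=1" "r2=0" using s1 s2 by auto
      have uvv: "u+v = 0" using a by simp
      have G: "G2a (p1+p2) (q1+q2) (r1+r2) (B1+B2) e n = G2a 3 1 0 (B1+B2) e n"
        "G2a p1 q1 r1 B1 e1 n1 = G2a 1 0 0 B1 e1 n1" "G2a p2 q2 r2 B2 e2 n2 = G2a 2 1 0 B2 e2 n2"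
        using pv by simp_all
      have fv: "f = B1 + B2 - 1*(K+h) + 0*h" using pv unfolding f_def by simp
      have bb: "1*K + 1 \<le> 4*B1" "2*B1 \<le> 1*K - 1" "2*K + 2 \<le> 4*B2" "2*B2 \<le> 2*K - 2"
        using b1 b2 pv by simp_all
      have e0: "(3::int) = 3 \<and> 1 = 1 \<and> 0 = 0 \<Longrightarrow> e = 0" using E1 pv by simp
      have fv': "f = B1 + B2 - K - h" using fv by simp
      have bb': "2*B1 \<le> 2*K - 2" "2*B2 \<le> 2*K - 2" using bb KK by linarith+
      have fneg: "f < 0" using fv' bb' KK by linarith
      have A2: "\<bar>W*0 + f\<bar> = -(W*0) - f" using fneg by simp
      have e00: "e = 0" using e0 by simp
      have GG: "G2a 3 1 0 (B1+B2) e n = 2*(1*(2*K+2*h) - (B1+B2)) + 2*e"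
        "G2a 2 1 0 B1 e1 n1 = 2*(K+h)" "G2a 1 0 0 B2 e2 n2 = 0" "G2a 2 1 0 B2 e2 n2 = 2*(K+h)" "G2a 1 0 0 B1 e1 n1 = 0"
        by (simp_all add: G2a_def)
      have fin: "2*\<bar>W*0 + f\<bar> - 2*W*\<bar>0::int\<bar> = -2*f" using fneg by simp
      show ?thesis unfolding G uvv GG using fin fv' e00 by smt
    qed
  qed
qed


definition T2 :: "int multiset \<Rightarrow> bool" where
  "T2 Bk \<longleftrightarrow> pp Bk = 3 \<and> qq Bk = 1 \<and> rr Bk = 1 \<and> sum_mset Bk = 0"
definition T1 :: "int multiset \<Rightarrow> bool" where
  "T1 R \<longleftrightarrow> pp R = 3 \<and> qq R = 1 \<and> rr R = 0"
definition good :: "int multiset \<Rightarrow> bool" where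
  "good S \<longleftrightarrow> (\<exists>P R. S = sum_mset P + R \<and> (\<forall>Bk\<in>#P. T2 Bk) \<and> (R = {#} \<or> R = {#h#} \<or> T1 R))"
definition ee :: "int multiset \<Rightarrow> int" where
  "ee S = (if good S then 0 else 1)"
definition G2 :: "int multiset \<Rightarrow> int" where
  "G2 S = G2a (pp S) (qq S) (rr S) (BB S) (ee S) (nn S)"

lemma ee01: "ee S \<in> {0,1}" by (simp add: ee_def)

lemma E1: assumes "pp S = 3" "qq S = 1" "rr S = 0" shows "ee S = 0"
proof -
  have "S = sum_mset {#} + S \<and> (\<forall>Bk\<in>#{#}. T2 Bk) \<and> (S = {#} \<or> S = {#h#} \<or> T1 S)"
    using assms by (simp add: T1_def)
  then have "good S" unfolding good_def by blast
  then show ?thesis by (simp add: ee_def)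
qed

lemma Eh: "ee {#h#} = 0"
proof -
  have "{#h#} = sum_mset {#} + {#h#} \<and> (\<forall>Bk\<in>#{#}. T2 Bk) \<and> ({#h#} = {#} \<or> {#h#} = {#h#} \<or> T1 {#h#})"
    by simp
  then have "good {#h#}" unfolding good_def by blast
  then show ?thesis by (simp add: ee_def)
qed

lemma sum_T2: "(\<forall>Bk\<in>#P. T2 Bk) \<Longrightarrow> sum_mset (sum_mset P) = 0"
  by (induction P) (auto simp: T2_def)

lemma T1_neg: assumes "T1 R" "R \<subseteq># X" shows "sum_mset R < 0"
proof -
  have b: "2 * BB R \<le> pp R * K - pp R" using sub_bounds[OF assms(2)] by simp
  have "sum_mset R = W * ww R + ff R" by (rule sum_eq)
  moreover have "ww R = 0" using assms(1) by (simp add: T1_def ww_def)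
  moreover have "ff R = BB R - (K + h)" using assms(1) by (simp add: T1_def ff_def)
  ultimately show ?thesis using b assms(1) h3 K1 by (simp add: T1_def)
qed

lemma h_cnt: "pp {#h#} = 0" "qq {#h#} = 0" "rr {#h#} = 1"
  using Hh by (auto simp: pp_def qq_def rr_def isA_def)

lemma E2:
  assumes sub: "S1 + S2 \<subseteq># X" and e1: "ee S1 = 0" and e2: "ee S2 = 0" and s0: "sum_mset (S1 + S2) = 0"
  shows "ee (S1 + S2) = 0"
proof -
  from e1 obtain P1 R1 where d1: "S1 = sum_mset P1 + R1" "\<forall>Bk\<in>#P1. T2 Bk" "R1 = {#} \<or> R1 = {#h#} \<or> T1 R1"
    unfolding ee_def good_def by (auto split: if_splits)
  from e2 obtain P2 R2 where d2: "S2 = sum_mset P2 + R2" "\<forall>Bk\<in>#P2. T2 Bk" "R2 = {#} \<or> R2 = {#h#} \<or> T1 R2"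
    unfolding ee_def good_def by (auto split: if_splits)
  have "R1 \<subseteq># S1" using d1(1) by simp
  moreover have "S1 \<subseteq># S1 + S2" by simp
  ultimately have R1X: "R1 \<subseteq># X" using sub by (meson subset_mset.order_trans)
  have "R2 \<subseteq># S2" using d2(1) by simp
  moreover have "S2 \<subseteq># S1 + S2" by simp
  ultimately have R2X: "R2 \<subseteq># X" using sub by (meson subset_mset.order_trans)
  have P12: "\<forall>Bk\<in>#P1+P2. T2 Bk" using d1(2) d2(2) by auto
  have sR: "sum_mset R1 + sum_mset R2 = 0"
    using s0 d1(1) d2(1) sum_T2[OF d1(2)] sum_T2[OF d2(2)] by simp
  have "good (S1 + S2)"
  proof -
    consider "R1 = {#}" | "R2 = {#}" | "R1 = {#h#} \<and> R2 = {#h#}" | "R1 = {#h#} \<and> T1 R2" | "T1 R1 \<and> R2 = {#h#}"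
      | "T1 R1 \<and> T1 R2" using d1(3) d2(3) by blast
    then show ?thesis
    proof cases
      case 1
      then have "S1 + S2 = sum_mset (P1+P2) + R2" using d1(1) d2(1) by simp
      then show ?thesis unfolding good_def using P12 d2(3) by blast
    next
      case 2
      then have "S1 + S2 = sum_mset (P1+P2) + R1" using d1(1) d2(1) by simp
      then show ?thesis unfolding good_def using P12 d1(3) by blast
    next
      case 3 then show ?thesis using sR hpos by simp
    next
      case 4
      have "T2 (R1 + R2)" using 4 sR unfolding T2_def T1_def add_counts by (simp add: h_cnt)
      moreover have "S1 + S2 = sum_mset (add_mset (R1+R2) (P1+P2)) + {#}" using d1(1) d2(1) by (simp add: ac_simps)
      moreover have "\<forall>Bk\<in>#add_mset (R1+R2) (P1+P2). T2 Bk" using P12 calculation(1) by simp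
      ultimately show ?thesis unfolding good_def by blast
    next
      case 5
      have "T2 (R1 + R2)" using 5 sR unfolding T2_def T1_def add_counts by (simp add: h_cnt)
      moreover have "S1 + S2 = sum_mset (add_mset (R1+R2) (P1+P2)) + {#}" using d1(1) d2(1) by (simp add: ac_simps)
      moreover have "\<forall>Bk\<in>#add_mset (R1+R2) (P1+P2). T2 Bk" using P12 calculation(1) by simp
      ultimately show ?thesis unfolding good_def by blast
    next
      case 6
      then have "sum_mset R1 < 0" "sum_mset R2 < 0" using T1_neg R1X R2X by auto
      then show ?thesis using sR by simp
    qed
  qed
  then show ?thesis by (simp add: ee_def)
qed


lemma ff_abs: assumes "S \<subseteq># X" shows "\<bar>ff S\<bar> \<le> (K+h) * nn S"
proof -
  note b = sub_bounds[OF assms]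
  have h0: "h \<ge> 0" "K \<ge> 0" using hpos K1 by auto
  have a1: "pp S * K \<le> pp S * (K+h)" using b(3) h0 by (intro mult_left_mono) auto
  have a2: "pp S * K \<ge> 0" using b(3) h0 by simp
  have a3: "rr S * h \<le> rr S * (K+h)" using b(5) h0 by (intro mult_left_mono) auto
  have a4: "rr S * h \<ge> 0" using b(5) h0 by simp
  have a5: "qq S * (K+h) \<ge> 0" using b(4) h0 by simp
  have a6: "(K+h) * nn S = pp S * (K+h) + qq S * (K+h) + rr S * (K+h)"
    using nn_eq[of S] by (simp add: algebra_simps)
  show ?thesis unfolding ff_def abs_le_iff using b(1,2,3) a1 a2 a3 a4 a5 a6 by linarith
qed

lemma nn_pos: "S \<noteq> {#} \<Longrightarrow> nn S \<ge> 1"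
  unfolding nn_def by (simp add: Suc_le_eq nonempty_has_size)

lemma G2_facts:
  assumes sub: "S \<subseteq># X" and ne: "S \<noteq> {#}"
  shows "0 \<le> G2 S" "st (pp S) (qq S) (rr S) \<Longrightarrow> G2 S + 2*\<bar>ff S\<bar> + 50*((K+h)*M^2) \<le> W"
    "\<not> st (pp S) (qq S) (rr S) \<Longrightarrow> G2 S = W - 2*(K+h)*nn S^2" "G2 S + 2*\<bar>ff S\<bar> \<le> W"
proof -
  note b = sub_bounds[OF sub]
  define C where "C = K + h"
  define Z where "Z = M^2 * K"
  have C0: "C \<ge> 0" "C \<le> 5*K" using hpos h4 K1 by (auto simp: C_def)
  have M2a: "M * 1 \<le> M * M" using M1 by (intro mult_left_mono) auto
  have M2e: "M^2 = M*M" by (simp add: power2_eq_square)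
  have M2: "M \<le> M^2" "M^2 \<ge> 1" using M2a M1 M2e by linarith+
  have "M^2 * 1 \<le> M^2 * K" using K1 M2 by (intro mult_left_mono) auto
  moreover have "1 * K \<le> M^2 * K" using K1 M2 by (intro mult_right_mono) auto
  ultimately have Z1: "K \<le> Z" "Z \<ge> 1" unfolding Z_def using M2 by linarith+
  have WZ: "W = 2500 * Z" using Wdef by (simp add: Z_def)
  have n1: "nn S \<ge> 1" using nn_pos[OF ne] .
  have n5: "nn S \<le> 5*M" using b(8) .
  have nsq: "nn S^2 \<le> 25 * M^2"
  proof -
    have "nn S^2 \<le> (5*M)^2" using n1 n5 by (intro power_mono) auto
    then show ?thesis by (simp add: power_mult_distrib)
  qed
  have f2: "C * nn S^2 \<le> C * (25 * M^2)" using nsq C0 by (intro mult_left_mono) auto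
  have f3: "C * nn S \<le> C * nn S^2" using n1 C0 by (intro mult_left_mono) (auto simp: power2_eq_square)
  have "C * M^2 \<le> (5*K) * M^2" using C0 M2 by (intro mult_right_mono) auto
  then have f5: "C * M^2 \<le> 5 * Z" unfolding Z_def by (simp add: algebra_simps)
  have f6: "C * M \<le> C * M^2" using C0 M2 by (intro mult_left_mono) auto
  have f7': "qq S * C \<le> M * C" using b(6) C0 by (intro mult_right_mono) auto
  have f7: "qq S * C \<le> C * M" using f7' by (simp add: mult.commute)
  have f8': "C * nn S \<le> C * (5*M)" using n5 C0 by (intro mult_left_mono) auto
  have f8: "C * nn S \<le> 5 * (C * M)" using f8' by (simp add: algebra_simps)
  have fa: "\<bar>ff S\<bar> \<le> C * nn S" using ff_abs[OF sub] by (simp add: C_def)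
  have qK: "qq S * K \<le> qq S * C" using b(4) hpos by (intro mult_left_mono) (auto simp: C_def)
  have qC: "qq S * C \<ge> 0" using b(4) C0 by simp
  have "pp S * K \<ge> 0" using b(3) K1 by simp
  then have BB0: "BB S \<ge> 0" using b(1,3) by linarith
  have Kz: "K \<ge> 1" using K1 by auto
  have sbound: "st (pp S) (qq S) (rr S) \<Longrightarrow> 0 \<le> G2 S \<and> G2 S \<le> 4 * (qq S * C) + 2 * C + 2"
  proof -
    assume "st (pp S) (qq S) (rr S)"
    then consider "pp S = 1 \<and> qq S = 0 \<and> rr S = 0" | "pp S = 0 \<and> qq S = 1 \<and> rr S = 0"
      | "pp S = 2 \<and> qq S = 0 \<and> rr S = 0" | "pp S = 1 \<and> qq S = 1 \<and> rr S = 0"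
      | "pp S = 2 \<and> qq S = 1 \<and> rr S = 0" | "pp S = 3 * qq S" unfolding st_def by blast
    then show "0 \<le> G2 S \<and> G2 S \<le> 4 * (qq S * C) + 2 * C + 2"
    proof cases
      case 1 then show ?thesis using qC C0 by (simp add: G2_def G2a_def)
    next
      case 2 then show ?thesis using qC C0 by (simp add: G2_def G2a_def)
    next
      case 3 then show ?thesis using b(1,2) C0 hpos by (simp add: G2_def G2a_def C_def)
    next
      case 4 then show ?thesis using b(1,2) C0 BB0 hpos by (simp add: G2_def G2a_def C_def)
    next
      case 5 then show ?thesis using C0 by (simp add: G2_def G2a_def C_def)
    next
      case 6
      then have nz: "\<not>((pp S=1 \<and> qq S=0 \<and> rr S=0) \<or> (pp S=0 \<and> qq S=1 \<and> rr S=0) \<or> (pp S=2 \<and> qq S=0 \<and> rr S=0)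
        \<or> (pp S=1 \<and> qq S=1 \<and> rr S=0) \<or> (pp S=2 \<and> qq S=1 \<and> rr S=0))" by auto
      have g: "G2 S = 2*(qq S*(2*K+2*h) - BB S) + 2 * ee S"
        unfolding G2_def using G2a_zero[OF 6] by simp
      have q2: "qq S*(2*K+2*h) = 2*(qq S * C)" by (simp add: C_def algebra_simps)
      have pk: "pp S * K = 3 * (qq S * K)" using 6 by simp
      have e: "ee S = 0 \<or> ee S = 1" using ee01[of S] by simp
      have C0': "C \<ge> 0" using C0 by simp
      show ?thesis using g q2 pk qK qC b(2,3) BB0 e C0' by (smt (verit))
    qed
  qed
  have wbound: "\<not> st (pp S) (qq S) (rr S) \<Longrightarrow> G2 S = W - 2*(K+h)*nn S^2"
    unfolding G2_def by (rule G2a_weird)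
  show "\<not> st (pp S) (qq S) (rr S) \<Longrightarrow> G2 S = W - 2*(K+h)*nn S^2" by (rule wbound)
  show "0 \<le> G2 S"
  proof (cases "st (pp S) (qq S) (rr S)")
    case True then show ?thesis using sbound by auto
  next
    case False
    have g: "G2 S = W - 2*(C*nn S^2)" using wbound[OF False] by (simp add: C_def)
    have "C*(25*M^2) = 25*(C*M^2)" by simp
    then show ?thesis using g f2 f5 WZ Z1 by linarith
  qed
  show "st (pp S) (qq S) (rr S) \<Longrightarrow> G2 S + 2*\<bar>ff S\<bar> + 50*((K+h)*M^2) \<le> W"
  proof -
    assume a: "st (pp S) (qq S) (rr S)"
    obtain fa' where fa': "\<bar>ff S\<bar> = fa'" by simp
    show ?thesis using sbound[OF a] fa f5 f6 f7 f8 C0 WZ Kz Z1 unfolding C_def[symmetric] fa' by linarith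
  qed
  show "G2 S + 2*\<bar>ff S\<bar> \<le> W"
  proof (cases "st (pp S) (qq S) (rr S)")
    case True
    obtain fa' where fa': "\<bar>ff S\<bar> = fa'" by simp
    show ?thesis using sbound[OF True] fa f5 f6 f7 f8 C0 WZ Kz Z1 unfolding fa' by linarith
  next
    case False
    have g: "G2 S = W - 2*(C*nn S^2)" using wbound[OF False] by (simp add: C_def)
    obtain fa' where fa': "\<bar>ff S\<bar> = fa'" by simp
    show ?thesis using g fa f3 unfolding fa' by linarith
  qed
qed


lemma step:
  assumes sub: "S1 + S2 \<subseteq># X" and ne1: "S1 \<noteq> {#}" and ne2: "S2 \<noteq> {#}"
  shows "W*(6*qq (S1+S2) - psi (ww (S1+S2))) + G2 (S1+S2) \<le>
    2*\<bar>sum_mset (S1+S2)\<bar> + (W*(6*qq S1 - psi (ww S1)) + G2 S1) + (W*(6*qq S2 - psi (ww S2)) + G2 S2)"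
proof -
  define S where "S = S1 + S2"
  have s1: "S1 \<subseteq># X" using sub by (meson mset_subset_eq_add_left subset_mset.order_trans)
  have s2: "S2 \<subseteq># X" using sub by (meson mset_subset_eq_add_right subset_mset.order_trans)
  have neS: "S \<noteq> {#}" using ne1 by (simp add: S_def)
  have subS: "S \<subseteq># X" using sub by (simp add: S_def)
  define w1 where "w1 = ww S1"
  define w2 where "w2 = ww S2"
  define w where "w = ww S"
  define f where "f = ff S"
  define C where "C = K + h"
  have ww: "w = w1 + w2" unfolding w_def w1_def w2_def S_def by (simp add: add_counts)
  have key: "W*(6*qq S - psi w) - W*(6*qq S1 - psi w1) - W*(6*qq S2 - psi w2) = W*(psi w1 + psi w2 - psi w)"
    unfolding S_def by (simp add: add_counts algebra_simps)
  have sumS: "sum_mset S = W*w + f" unfolding w_def f_def by (rule sum_eq)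
  have W0: "W > 0" by (rule Wpos)
  have absb: "2*\<bar>W*w + f\<bar> \<ge> 2*(W*\<bar>w\<bar>) - 2*\<bar>f\<bar>"
  proof -
    have "\<bar>W*w\<bar> = W*\<bar>w\<bar>" using W0 by (simp add: abs_mult)
    moreover have "\<bar>W*w\<bar> \<le> \<bar>W*w + f\<bar> + \<bar>f\<bar>" by (smt (verit))
    ultimately show ?thesis by simp
  qed
  note F = G2_facts[OF subS neS] and F1 = G2_facts[OF s1 ne1] and F2 = G2_facts[OF s2 ne2]
  have fa: "\<bar>f\<bar> \<le> C * nn S" using ff_abs[OF subS] by (simp add: f_def C_def)
  have Dle: "psi w1 + psi w2 \<le> psi w + 2*\<bar>w\<bar>" using psi_ineq[of w1 w2] ww by simp
  have goal: "G2 S \<le> 2*\<bar>W*w + f\<bar> + W*(psi w - psi w1 - psi w2) + G2 S1 + G2 S2"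
  proof (cases "psi w1 + psi w2 = psi w + 2*\<bar>w\<bar>")
    case False
    then have "1 - 2*\<bar>w\<bar> \<le> psi w - psi w1 - psi w2" using Dle by linarith
    then have "W*(1 - 2*\<bar>w\<bar>) \<le> W*(psi w - psi w1 - psi w2)" using W0 by (intro mult_left_mono) auto
    then have "W - 2*(W*\<bar>w\<bar>) \<le> W*(psi w - psi w1 - psi w2)" by (simp add: algebra_simps)
    then show ?thesis using absb F(4) F1(1) F2(1) f_def by linarith
  next
    case True
    then have "psi w - psi w1 - psi w2 = -(2*\<bar>w\<bar>)" by simp
    then have E: "W*(psi w - psi w1 - psi w2) = -(2*(W*\<bar>w\<bar>))" by simp
    have tp: "(w1=1 \<and> w2=1) \<or> (w1=-3 \<and> w2=2) \<or> (w1=2 \<and> w2=-3) \<or> (w1=-3 \<and> w2=1) \<or> (w1=1 \<and> w2=-3)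
    \<or> (w1=-2 \<and> w2=1) \<or> (w1=1 \<and> w2=-2) \<or> (w1=-1 \<and> w2=1) \<or> (w1=1 \<and> w2=-1) \<or> (w1=0 \<and> w2=0)"
      using psi_tight[of w1 w2] True ww by simp
    show ?thesis
    proof (cases "st (pp S1) (qq S1) (rr S1) \<and> st (pp S2) (qq S2) (rr S2)")
      case True
      then have st1: "st (pp S1) (qq S1) (rr S1)" and st2: "st (pp S2) (qq S2) (rr S2)" by auto
      note b1 = sub_bounds[OF s1] and b2 = sub_bounds[OF s2]
      have fW: "2*\<bar>BB S1 + BB S2 - (qq S1 + qq S2)*(K+h) + (rr S1 + rr S2)*h\<bar> \<le> W"
        using F(4) F(1) unfolding S_def add_counts ff_def by linarith
      have E1': "pp S1 + pp S2 = 3 \<and> qq S1 + qq S2 = 1 \<and> rr S1 + rr S2 = 0 \<Longrightarrow> ee S = 0"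
        using E1[of S] unfolding S_def add_counts by auto
      have E2': "ee S = 0" if "pp S1 = 3*qq S1" "pp S2 = 3*qq S2"
        "BB S1 + BB S2 - (qq S1 + qq S2)*(K+h) + (rr S1 + rr S2)*h = 0" "ee S1 = 0" "ee S2 = 0"
      proof -
        have "ff S = 0" using that(3) unfolding S_def add_counts ff_def .
        moreover have "ww S = 0" using that(1,2) unfolding S_def add_counts ww_def by simp
        ultimately have "sum_mset S = 0" using sum_eq[of S] by simp
        then show ?thesis using E2[OF sub that(4,5)] by (simp add: S_def)
      qed
      have T: "G2a (pp S1 + pp S2) (qq S1 + qq S2) (rr S1 + rr S2) (BB S1 + BB S2) (ee S) (nn S) \<le>
        2*\<bar>W*(w1+w2) + (BB S1 + BB S2 - (qq S1 + qq S2)*(K+h) + (rr S1 + rr S2)*h)\<bar> - 2*W*\<bar>w1+w2\<bar>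
          + G2a (pp S1) (qq S1) (rr S1) (BB S1) (ee S1) (nn S1) + G2a (pp S2) (qq S2) (rr S2) (BB S2) (ee S2) (nn S2)"
        by (rule tight_st[OF tp _ _ st1 st2 b1(1) b1(2) b2(1) b2(2) ee01 ee01 ee01 E1' E2' fW])
           (simp_all add: w1_def w2_def ww_def)
      have gS: "G2 S = G2a (pp S1 + pp S2) (qq S1 + qq S2) (rr S1 + rr S2) (BB S1 + BB S2) (ee S) (nn S)"
        unfolding G2_def S_def add_counts ..
      have "f = BB S1 + BB S2 - (qq S1 + qq S2)*(K+h) + (rr S1 + rr S2)*h"
        unfolding f_def S_def add_counts ff_def ..
      then have eq2: "W*(w1+w2) + (BB S1 + BB S2 - (qq S1 + qq S2)*(K+h) + (rr S1 + rr S2)*h) = W*w + f"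
        using ww by simp
      have eq3: "w1 + w2 = w" using ww by simp
      have T': "G2 S \<le> 2*\<bar>W*w+f\<bar> - 2*(W*\<bar>w\<bar>) + G2 S1 + G2 S2"
        using T unfolding eq2 unfolding eq3 gS[symmetric] G2_def[symmetric] by (simp add: mult.assoc)
      show ?thesis by (rule lin1[OF T' E])
    next
      case False
      show ?thesis
      proof (cases "st (pp S) (qq S) (rr S)")
        case True
        from False consider "\<not> st (pp S1) (qq S1) (rr S1)" | "\<not> st (pp S2) (qq S2) (rr S2)" by blast
        then show ?thesis
        proof cases
          case 1
          have g1: "G2 S1 = W - 2*C*nn S1^2" using F1(3)[OF 1] by (simp add: C_def)
          have "nn S1 \<le> 5*M" using sub_bounds[OF s1] by simp
          then have "nn S1^2 \<le> (5*M)^2" using nn_pos[OF ne1] by (intro power_mono) auto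
          then have "C*nn S1^2 \<le> C*(25*M^2)" using hpos K1 by (intro mult_left_mono) (auto simp: C_def power_mult_distrib)
          then show ?thesis using g1 F(2)[OF True] F2(1) absb E f_def C_def by (simp add: algebra_simps)
        next
          case 2
          have g2: "G2 S2 = W - 2*C*nn S2^2" using F2(3)[OF 2] by (simp add: C_def)
          have "nn S2 \<le> 5*M" using sub_bounds[OF s2] by simp
          then have "nn S2^2 \<le> (5*M)^2" using nn_pos[OF ne2] by (intro power_mono) auto
          then have "C*nn S2^2 \<le> C*(25*M^2)" using hpos K1 by (intro mult_left_mono) (auto simp: C_def power_mult_distrib)
          then show ?thesis using g2 F(2)[OF True] F1(1) absb E f_def C_def by (simp add: algebra_simps)
        qed
      next
        case Fs: False
        have g: "G2 S = W - 2*C*nn S^2" using F(3)[OF Fs] by (simp add: C_def)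
        have cl: "\<not> (st (pp S1) (qq S1) (rr S1) \<and> st (pp S2) (qq S2) (rr S2))"
        proof
          assume a: "st (pp S1) (qq S1) (rr S1) \<and> st (pp S2) (qq S2) (rr S2)"
          have "st (pp S1 + pp S2) (qq S1 + qq S2) (rr S1 + rr S2)"
            by (rule tight_closure[OF tp]) (use a in \<open>simp_all add: w1_def w2_def ww_def\<close>)
          then show False using Fs unfolding S_def add_counts by simp
        qed
        have nS: "nn S = nn S1 + nn S2" unfolding S_def by (simp add: add_counts)
        have C0: "C \<ge> 0" using hpos K1 by (simp add: C_def)
        have n1: "nn S1 \<ge> 1" "nn S2 \<ge> 1" using nn_pos ne1 ne2 by auto
        have sq1: "C*nn S^2 - C*nn S1^2 \<ge> C*nn S"
        proof -
          have "nn S^2 - nn S1^2 = nn S2 * (nn S + nn S1)" unfolding nS by (simp add: power2_eq_square algebra_simps)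
          moreover have "nn S2 * (nn S + nn S1) \<ge> 1 * nn S" using n1 nS by (intro mult_mono) auto
          ultimately have "nn S^2 - nn S1^2 \<ge> nn S" by simp
          then have "C*(nn S^2 - nn S1^2) \<ge> C*nn S" using C0 by (intro mult_left_mono) auto
          then show ?thesis by (simp add: algebra_simps)
        qed
        have sq2: "C*nn S^2 - C*nn S2^2 \<ge> C*nn S"
        proof -
          have "nn S^2 - nn S2^2 = nn S1 * (nn S + nn S2)" unfolding nS by (simp add: power2_eq_square algebra_simps)
          moreover have "nn S1 * (nn S + nn S2) \<ge> 1 * nn S" using n1 nS by (intro mult_mono) auto
          ultimately have "nn S^2 - nn S2^2 \<ge> nn S" by simp
          then have "C*(nn S^2 - nn S2^2) \<ge> C*nn S" using C0 by (intro mult_left_mono) auto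
          then show ?thesis by (simp add: algebra_simps)
        qed
        from cl consider "\<not> st (pp S1) (qq S1) (rr S1)" | "\<not> st (pp S2) (qq S2) (rr S2)" by blast
        then show ?thesis
        proof cases
          case 1
          have g1: "G2 S1 = W - 2*C*nn S1^2" using F1(3)[OF 1] by (simp add: C_def)
          show ?thesis using g g1 sq1 fa F2(1) absb E by linarith
        next
          case 2
          have g2: "G2 S2 = W - 2*C*nn S2^2" using F2(3)[OF 2] by (simp add: C_def)
          show ?thesis using g g2 sq2 fa F1(1) absb E by linarith
        qed
      qed
    qed
  qed
  have fin: "W*(6*qq S - psi w) + G2 S \<le> 2*\<bar>sum_mset S\<bar> + (W*(6*qq S1 - psi w1) + G2 S1) + (W*(6*qq S2 - psi w2) + G2 S2)"
  proof -
    obtain A where A: "\<bar>W*w + f\<bar> = A" by simp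
    obtain B where B: "\<bar>sum_mset S\<bar> = B" by simp
    have AB: "B = A" using A B sumS by simp
    have neg: "W*(psi w - psi w1 - psi w2) = -(W*(psi w1 + psi w2 - psi w))" by (simp add: algebra_simps)
    show ?thesis unfolding B using goal[unfolded A] key neg AB by linarith
  qed
  then show ?thesis by (simp add: S_def w_def w1_def w2_def)
qed


lemma leaf_bound:
  assumes "x \<in># X"
  shows "W*(6*qq {#x#} - psi (ww {#x#})) + G2 {#x#} \<le> 0"
proof -
  have v: "x = -H \<or> x = h \<or> isA x" unfolding isA_def by blast
  have n1: "nn {#x#} = 1" by (simp add: nn_def)
  consider "x = -H" | "x = h" | "isA x" using v by blast
  then show ?thesis
  proof cases
    case 1
    then have c: "pp {#x#} = 0" "qq {#x#} = 1" "rr {#x#} = 0" using Hh by (auto simp: pp_def qq_def rr_def isA_def)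
    then show ?thesis by (simp add: ww_def psi_def G2_def G2a_def)
  next
    case 2
    then have c: "pp {#x#} = 0" "qq {#x#} = 0" "rr {#x#} = 1" using Hh by (auto simp: pp_def qq_def rr_def isA_def)
    have b: "BB {#x#} = 0" using c 2 by (simp add: BB_def)
    have g: "G2 {#x#} = 0" unfolding G2_def using G2a_zero[of "pp {#x#}" "qq {#x#}"] c b Eh 2 by simp
    show ?thesis using c g by (simp add: ww_def psi_def)
  next
    case 3
    then have c: "pp {#x#} = 1" "qq {#x#} = 0" "rr {#x#} = 0" by (auto simp: pp_def qq_def rr_def isA_def)
    then show ?thesis by (simp add: ww_def psi_def G2_def G2a_def)
  qed
qed

lemma tree_bound: "leaves T \<subseteq># X \<Longrightarrow> W*(6*qq (leaves T) - psi (ww (leaves T))) + G2 (leaves T) \<le> 2 * cost T"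
proof (induction T)
  case (Leaf x)
  then have "x \<in># X" by simp
  then show ?case using leaf_bound by simp
next
  case (Node l r)
  have sub: "leaves l + leaves r \<subseteq># X" using Node.prems by simp
  have sl: "leaves l \<subseteq># X" using sub by (meson mset_subset_eq_add_left subset_mset.order_trans)
  have sr: "leaves r \<subseteq># X" using sub by (meson mset_subset_eq_add_right subset_mset.order_trans)
  have "W*(6*qq (leaves l + leaves r) - psi (ww (leaves l + leaves r))) + G2 (leaves l + leaves r) \<le>
    2*\<bar>sum_mset (leaves l + leaves r)\<bar> + (W*(6*qq (leaves l) - psi (ww (leaves l))) + G2 (leaves l))
      + (W*(6*qq (leaves r) - psi (ww (leaves r))) + G2 (leaves r))"
    by (rule step[OF sub leaves_ne leaves_ne])
  moreover have "cost (Node l r) = \<bar>sum_mset (leaves l + leaves r)\<bar> + cost l + cost r"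
    by (simp add: tval_leaves)
  ultimately show ?case using Node.IH sl sr by simp
qed

lemma ppX: "pp X = 3 * M" using nn_eq[of X] XH Xh Xs by (simp add: nn_def qq_def rr_def)

lemma lower:
  assumes "leaves T = X"
  shows "W*(6*M) + 2*(M*(2*K+2*h) - BB X) + 2*ee X \<le> 2*cost T"
proof -
  have q: "qq X = M" using XH by (simp add: qq_def)
  have w: "ww X = 0" using q ppX by (simp add: ww_def)
  have g: "G2 X = 2*(M*(2*K+2*h) - BB X) + 2*ee X"
    unfolding G2_def using G2a_zero[of "pp X" "qq X"] q ppX by simp
  show ?thesis using tree_bound[of T] assms q w g by (simp add: psi_def)
qed

lemma qq_sum_T2: "(\<forall>Bk\<in>#P. T2 Bk) \<Longrightarrow> qq (sum_mset P) = int (size P) \<and> rr (sum_mset P) = int (size P)"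
proof (induction P)
  case empty then show ?case by (simp add: qq_def rr_def)
next
  case (add Bk P)
  then show ?case by (simp add: add_counts T2_def)
qed

lemma strip_sum:
  assumes "\<forall>Bk\<in>#P. {#-H, h#} \<subseteq># Bk"
  shows "sum_mset (image_mset (\<lambda>Bk. Bk - {#-H, h#}) P) + replicate_mset (size P) (-H) + replicate_mset (size P) h
     = sum_mset P"
  using assms
proof (induction P)
  case empty then show ?case by simp
next
  case (add Bk P)
  then have IH: "sum_mset (image_mset (\<lambda>Bk. Bk - {#-H, h#}) P) + replicate_mset (size P) (-H) + replicate_mset (size P) h
     = sum_mset P" by simp
  have sb: "{#-H, h#} \<subseteq># Bk" using add.prems by simp
  have d: "Bk - {#-H, h#} + {#-H, h#} = Bk" by (rule subset_mset.diff_add[OF sb])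
  have "sum_mset (image_mset (\<lambda>Bk. Bk - {#-H, h#}) (add_mset Bk P)) + replicate_mset (size (add_mset Bk P)) (-H)
      + replicate_mset (size (add_mset Bk P)) h
    = (Bk - {#-H, h#} + {#-H, h#}) + (sum_mset (image_mset (\<lambda>Bk. Bk - {#-H, h#}) P) + replicate_mset (size P) (-H) + replicate_mset (size P) h)"
    by (simp add: ac_simps)
  also have "\<dots> = Bk + sum_mset P" using d IH by simp
  finally show ?case by simp
qed

lemma good_X:
  assumes "good X"
  shows "\<exists>P. int (size P) = M \<and> sum_mset P + replicate_mset (size P) (-H) + replicate_mset (size P) h = X
     \<and> (\<forall>Bk\<in>#P. sum_mset Bk = H - h)"
proof -
  from assms obtain P R where d: "X = sum_mset P + R" "\<forall>Bk\<in>#P. T2 Bk" "R = {#} \<or> R = {#h#} \<or> T1 R"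
    unfolding good_def by blast
  have c: "qq (sum_mset P) = int (size P)" "rr (sum_mset P) = int (size P)" using qq_sum_T2[OF d(2)] by auto
  have q: "qq X = M" "rr X = M" using XH Xh by (simp_all add: qq_def rr_def)
  have "qq X = int (size P) + qq R" "rr X = int (size P) + rr R" using d(1) c by (simp_all add: add_counts)
  then have qr: "qq R = rr R" "int (size P) + qq R = M" using q by auto
  have R0: "R = {#}"
  proof -
    have "R \<noteq> {#h#}" using qr h_cnt by auto
    moreover have "\<not> T1 R" using qr by (auto simp: T1_def)
    ultimately show ?thesis using d(3) by blast
  qed
  then have sz: "int (size P) = M" using qr by (simp add: qq_def)
  have X: "X = sum_mset P" using d(1) R0 by simp
  have inc: "\<forall>Bk\<in>#P. {#-H, h#} \<subseteq># Bk"
  proof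
    fix Bk assume "Bk \<in># P"
    then have t: "T2 Bk" using d(2) by blast
    then have cc: "count Bk (-H) = 1" "count Bk h = 1" by (auto simp: T2_def qq_def rr_def)
    then have m: "-H \<in># Bk" "h \<in># Bk" by (simp_all add: count_greater_zero_iff[symmetric])
    have "count {#-H, h#} a \<le> count Bk a" for a using cc Hh m by auto
    then show "{#-H, h#} \<subseteq># Bk" by (simp add: subseteq_mset_def)
  qed
  define P' where "P' = image_mset (\<lambda>Bk. Bk - {#-H, h#}) P"
  have "sum_mset P' + replicate_mset (size P') (-H) + replicate_mset (size P') h = X"
    using strip_sum[OF inc] X by (simp add: P'_def)
  moreover have "int (size P') = M" using sz by (simp add: P'_def)
  moreover have "\<forall>Bk\<in>#P'. sum_mset Bk = H - h"
  proof
    fix Bk' assume "Bk' \<in># P'"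
    then obtain Bk where Bk: "Bk \<in># P" "Bk' = Bk - {#-H, h#}" by (auto simp: P'_def)
    have sb: "{#-H, h#} \<subseteq># Bk" using inc Bk(1) by blast
    have "Bk - {#-H, h#} + {#-H, h#} = Bk" by (rule subset_mset.diff_add[OF sb])
    moreover have "sum_mset (Bk - {#-H, h#} + {#-H, h#}) = sum_mset (Bk - {#-H, h#}) + sum_mset {#-H, h#}"
      by (rule sum_mset.union)
    ultimately have "sum_mset Bk = sum_mset (Bk - {#-H, h#}) + (-H + h)" by simp
    moreover have "sum_mset Bk = 0" using d(2) Bk(1) by (auto simp: T2_def)
    ultimately show "sum_mset Bk' = H - h" using Bk(2) by simp
  qed
  ultimately show ?thesis by blast
qed


lemma block3:
  assumes sub: "Bk \<subseteq># X" and allA: "\<forall>x\<in>#Bk. isA x" and sm: "sum_mset Bk = H - h"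
  shows "\<exists>x y z. Bk = {#x,y,z#} \<and> 0 \<le> y+z \<and> y+z \<le> H \<and> x+y+z = H - h"
proof -
  have fB: "filter_mset isA Bk = Bk"
    by (rule multiset_eqI) (use allA in \<open>auto simp: count_eq_zero_iff\<close>)
  have p: "pp Bk = int (size Bk)" by (simp add: pp_def fB)
  have q: "qq Bk = 0" using allA by (auto simp: qq_def isA_def count_eq_zero_iff)
  have r: "rr Bk = 0" using allA by (auto simp: rr_def isA_def count_eq_zero_iff)
  note b = sub_bounds[OF sub]
  have BBe: "BB Bk = sum_mset Bk - pp Bk * W" using q r by (simp add: BB_def)
  have WK: "W \<ge> 2500 * K"
  proof -
    have "M^2 \<ge> 1" using M1 by (simp add: one_le_power)
    then have "M^2 * K \<ge> 1 * K" using K1 by (intro mult_right_mono) auto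
    then show ?thesis using Wdef by simp
  qed
  have HW: "H = 3*W + K + h" by (rule Hdef)
  have n3: "size Bk = 3"
  proof -
    consider "size Bk = 0" | "size Bk = 1" | "size Bk = 2" | "size Bk = 3" | "size Bk \<ge> 4" by linarith
    then show ?thesis
    proof cases
      case 1 then show ?thesis using b(2) p BBe sm HW Wpos K1 hpos by simp
    next
      case 2 then show ?thesis using b(2) p BBe sm HW Wpos K1 hpos by simp
    next
      case 3 then show ?thesis using b(2) p BBe sm HW Wpos K1 hpos by simp
    next
      case 4 then show ?thesis .
    next
      case 5
      then have "int (size Bk) \<ge> 4" by simp
      then have "int (size Bk) * W \<ge> 4 * W" using Wpos by (intro mult_right_mono) auto
      moreover have "pp Bk * K \<ge> 0" using b(3) K1 by simp
      then have "BB Bk \<ge> 0" using b(1,3) by linarith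
      moreover have "pp Bk * W = int (size Bk) * W" using p by simp
      ultimately have False using BBe sm HW WK hpos K1 by linarith
      then show ?thesis ..
    qed
  qed
  then have "size Bk = Suc 2" by simp
  then obtain x R1 where x1: "Bk = add_mset x R1" "size R1 = Suc 1" using size_eq_Suc_imp_eq_union by fastforce
  then obtain y R2 where x2: "R1 = add_mset y R2" "size R2 = Suc 0" using size_eq_Suc_imp_eq_union by fastforce
  then obtain z R3 where x3: "R2 = add_mset z R3" "size R3 = 0" using size_eq_Suc_imp_eq_union by fastforce
  from x1 x2 x3 have "Bk = {#x,y,z#}" by simp
  then have Bk: "Bk = {#x,y,z#}" .
  have yz: "y \<in># X" "z \<in># X" "isA y" "isA z" using sub allA Bk by (auto intro: mset_subset_eqD)
  have by1: "K < 4 * (y - W) \<and> 2 * (y - W) < K" using Xel yz(1,3) unfolding isA_def by blast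
  have bz1: "K < 4 * (z - W) \<and> 2 * (z - W) < K" using Xel yz(2,4) unfolding isA_def by blast
  have sx: "x + y + z = H - h" using sm Bk by (simp add: ac_simps)
  have cs: "K < 4*y - 4*W" "K < 4*z - 4*W" "2*y - 2*W < K" "2*z - 2*W < K" using by1 bz1 by auto
  have "0 \<le> y + z" using cs K1 Wpos by linarith
  moreover have "y + z \<le> H" using cs HW K1 hpos Wpos by linarith
  ultimately show ?thesis using Bk sx by blast
qed

end

lemma build:
  fixes H h :: int and P :: "int multiset multiset"
  assumes h0: "h \<ge> 0" and ne: "P \<noteq> {#}"
    and bl: "\<forall>Bk\<in>#P. \<exists>x y z. Bk = {#x,y,z#} \<and> 0 \<le> y+z \<and> y+z \<le> H \<and> x+y+z = H - h"
  shows "\<exists>T. leaves T = sum_mset P + replicate_mset (size P) (-H) + replicate_mset (size P) h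
     \<and> tval T = 0 \<and> cost T = int (size P) * (H + h)"
  using ne bl
proof (induction P)
  case empty then show ?case by simp
next
  case (add Bk P)
  obtain x y z where xyz: "Bk = {#x,y,z#}" "0 \<le> y+z" "y+z \<le> H" "x+y+z = H - h" using add.prems(2) by auto
  define Tb where "Tb = Node (Node (Node (Node (Leaf y) (Leaf z)) (Leaf (-H))) (Leaf x)) (Leaf h)"
  have lb: "leaves Tb = Bk + {#-H, h#}" using xyz(1) by (simp add: Tb_def ac_simps)
  have tb: "tval Tb = 0" using xyz(4) by (simp add: Tb_def)
  have cb: "cost Tb = H + h"
  proof -
    have "cost Tb = \<bar>y+z\<bar> + \<bar>y+z+ -H\<bar> + \<bar>y+z+ -H + x\<bar> + \<bar>y+z+ -H + x + h\<bar>"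
      by (simp add: Tb_def)
    also have "\<dots> = (y+z) + (H - (y+z)) + h + 0" using xyz h0 by (simp add: abs_if)
    finally show ?thesis by simp
  qed
  show ?case
  proof (cases "P = {#}")
    case True
    then show ?thesis using lb tb cb by (intro exI[of _ Tb]) (simp add: ac_simps)
  next
    case False
    then obtain T0 where T0: "leaves T0 = sum_mset P + replicate_mset (size P) (-H) + replicate_mset (size P) h"
      "tval T0 = 0" "cost T0 = int (size P) * (H + h)" using add.IH add.prems(2) by auto
    have "leaves (Node Tb T0) = sum_mset (add_mset Bk P) + replicate_mset (size (add_mset Bk P)) (-H) + replicate_mset (size (add_mset Bk P)) h"
      using lb T0(1) by (simp add: ac_simps)
    moreover have "tval (Node Tb T0) = 0" using tb T0(2) by simp
    moreover have "cost (Node Tb T0) = int (size (add_mset Bk P)) * (H + h)"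
      using cb tb T0 by (simp add: algebra_simps)
    ultimately show ?thesis by blast
  qed
qed


theorem lemma2p10:
  fixes m K :: nat and b :: "nat \<Rightarrow> int" and W L h H :: int and eps :: real
    and A X :: "int multiset" and a :: "nat \<Rightarrow> int" and T :: atree
  assumes "m > 0" and "K > 0"
    and "\<And>i. i < 3 * m \<Longrightarrow> b i > 0"
    and "\<And>i. i < 3 * m \<Longrightarrow> real K / 4 < real_of_int (b i) \<and> real_of_int (b i) < real K / 2"
    and "(\<Sum>i<3 * m. b i) = int m * int K"
    and "W = 100 * (5 * int m)^2 * int K"
    and "\<And>i. a i = b i + W"
    and "A = mset (map a [0..<3 * m])"
    and "L = 3 * W + int K"
    and "eps = 1 / (400 * (5 * real m)^2)"
    and "h = \<lfloor>4 * eps * real_of_int L\<rfloor>"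
    and "H = L + h"
    and "X = A + replicate_mset m (- H) + replicate_mset m h"
    and "min_cost_tree T X"
  shows "cost T \<ge> int m * (H + h) \<and>
         (cost T = int m * (H + h) \<longleftrightarrow> three_partition_pos A m L)"
proof -
  note m0 = assms(1) and K0 = assms(2) and bb = assms(4) and bsum = assms(5) and Wdef0 = assms(6)
    and adef = assms(7) and Adef = assms(8) and Ldef = assms(9) and epsdef = assms(10)
    and hdef = assms(11) and Hdef0 = assms(12) and Xdef = assms(13) and Tmin = assms(14)
  define M where "M = int m"
  have M1: "M \<ge> 1" using m0 by (simp add: M_def)
  have K1: "int K \<ge> 1" using K0 by simp
  have Wd: "W = 2500 * M^2 * int K" using Wdef0 by (simp add: M_def power_mult_distrib)
  have M2: "M^2 \<ge> 1" using M1 by (simp add: one_le_power)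
  have WK: "W \<ge> 2500 * int K"
  proof -
    have "M^2 * int K \<ge> 1 * int K" using M2 K1 by (intro mult_right_mono) auto
    then show ?thesis using Wd by simp
  qed
  have Wpos: "W > 0" using WK K1 by simp
  have rm: "real m > 0" using m0 by simp
  have val: "4 * eps * real_of_int L = 3 * real K + real K / (2500 * (real m)^2)"
  proof -
    have "real_of_int L = 3 * (2500 * (real m)^2 * real K) + real K"
      using Ldef Wd by (simp add: M_def)
    moreover have "4 * eps = 1 / (2500 * (real m)^2)" using epsdef by (simp add: power_mult_distrib)
    ultimately have "4 * eps * real_of_int L = (3 * (2500 * (real m)^2 * real K) + real K) / (2500 * (real m)^2)"
      by simp
    also have "\<dots> = 3 * real K + real K / (2500 * (real m)^2)" using rm by (simp add: field_simps)
    finally show ?thesis .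
  qed
  have fr: "real K / (2500 * (real m)^2) \<le> real K"
  proof -
    have "(real m)^2 \<ge> 1" using m0 by (simp add: one_le_power)
    then have "2500 * (real m)^2 \<ge> 1" by simp
    then show ?thesis using K0 by (simp add: divide_le_eq)
  qed
  have fr0: "real K / (2500 * (real m)^2) \<ge> 0" by simp
  have h3: "3 * int K \<le> h"
  proof -
    have "real_of_int (3 * int K) \<le> 4 * eps * real_of_int L" using val fr0 by simp
    then show ?thesis unfolding hdef by (simp add: le_floor_iff)
  qed
  have h4: "h \<le> 4 * int K"
  proof -
    have "4 * eps * real_of_int L \<le> real_of_int (4 * int K)" using val fr by simp
    then have "\<lfloor>4 * eps * real_of_int L\<rfloor> \<le> \<lfloor>real_of_int (4 * int K)\<rfloor>" by (rule floor_mono)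
    then show ?thesis unfolding hdef floor_of_int .
  qed
  have hpos: "h > 0" using h3 K1 by simp
  have Hd: "H = 3 * W + int K + h" using Hdef0 Ldef by simp
  have Hpos: "H > 0" using Hd Wpos hpos K1 by simp
  have bint: "int K < 4 * b i \<and> 2 * b i < int K" if "i < 3*m" for i
  proof -
    have r: "real K / 4 < real_of_int (b i)" "real_of_int (b i) < real K / 2" using bb[OF that] by auto
    have "real_of_int (int K) < real_of_int (4 * b i)" using r(1) by simp
    moreover have "real_of_int (2 * b i) < real_of_int (int K)" using r(2) by simp
    ultimately show ?thesis by (simp only: of_int_less_iff)
  qed
  have Amem: "\<exists>i<3*m. x = b i + W" if "x \<in># A" for x
    using that Adef adef by auto
  have Ael: "x - W > 0 \<and> int K < 4 * (x - W) \<and> 2 * (x - W) < int K" if xA: "x \<in># A" for x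
  proof -
    obtain i where i: "i < 3*m" "x = b i + W" using Amem[OF xA] by blast
    have "int K < 4 * b i \<and> 2 * b i < int K" by (rule bint[OF i(1)])
    then show ?thesis using i K1 by auto
  qed
  have AnH: "x \<noteq> -H" "x \<noteq> h" if "x \<in># A" for x
  proof -
    have "x > W" using Ael[OF that] by simp
    then show "x \<noteq> -H" "x \<noteq> h" using Wpos Hpos WK h4 by auto
  qed
  have Xel: "\<forall>x\<in>#X. x = -H \<or> x = h \<or> (int K < 4 * (x - W) \<and> 2 * (x - W) < int K)"
  proof
    fix x assume "x \<in># X"
    then have "x \<in># A \<or> x = -H \<or> x = h" using Xdef by (auto split: if_splits)
    then show "x = -H \<or> x = h \<or> (int K < 4 * (x - W) \<and> 2 * (x - W) < int K)" using Ael by blast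
  qed
  have cA: "count A (-H) = 0" "count A h = 0" using AnH by (auto simp: count_eq_zero_iff)
  have hH: "h \<noteq> -H" using hpos Hpos by simp
  have sA: "size A = 3 * m" using Adef by simp
  have XH: "int (count X (-H)) = M" using Xdef cA hH by (simp add: M_def)
  have Xh: "int (count X h) = M" using Xdef cA hH by (simp add: M_def)
  have Xs: "int (size X) = 5 * M" using Xdef sA by (simp add: M_def)
  interpret P: P3 M "int K" W h H X
    by unfold_locales (use M1 K1 Wd h3 h4 Hd Xel XH Xh Xs in auto)
  have sumA: "sum_mset A = M * int K + 3 * M * W"
  proof -
    have "sum_mset A = sum_list (map a [0..<3*m])" using Adef by (simp only: sum_mset_sum_list)
    also have "\<dots> = sum a (set [0..<3*m])" by (simp only: sum_set_upt_conv_sum_list_nat)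
    also have "\<dots> = (\<Sum>i<3*m. a i)" by (simp add: atLeast0LessThan)
    also have "\<dots> = (\<Sum>i<3*m. b i) + (\<Sum>i<3*m. W)" using adef by (simp add: sum.distrib)
    also have "\<dots> = M * int K + 3 * M * W" using bsum by (simp add: M_def)
    finally show ?thesis .
  qed
  have sumX: "sum_mset X = sum_mset A - M * H + M * h" using Xdef by (simp add: M_def)
  have BBX: "P.BB X = M * int K"
  proof -
    have "P.qq X = M" "P.rr X = M" using XH Xh by (simp_all add: P.qq_def P.rr_def)
    then show ?thesis unfolding P.BB_def using P.ppX sumX sumA by (simp add: algebra_simps)
  qed
  have lv: "leaves T = X" using Tmin by (simp add: min_cost_tree_def addition_tree_over_def)
  have low: "W*(6*M) + 2*(M*(2*int K+2*h) - M * int K) + 2*P.ee X \<le> 2*cost T"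
    using P.lower[OF lv] BBX by simp
  have tgt: "int m * (H + h) = 3 * M * W + M * int K + 2 * M * h" using Hd by (simp add: M_def algebra_simps)
  have ee: "P.ee X \<in> {0,1}" by (rule P.ee01)
  have low2: "cost T \<ge> int m * (H + h) + P.ee X" using low tgt by (simp add: algebra_simps)
  have part1: "cost T \<ge> int m * (H + h)" using low2 ee by auto
  have dir1: "three_partition_pos A m L" if c: "cost T = int m * (H + h)"
  proof -
    have "P.ee X = 0" using low2 c ee by auto
    then have "P.good X" by (simp add: P.ee_def split: if_splits)
    then obtain P where P: "int (size P) = M" "sum_mset P + replicate_mset (size P) (-H) + replicate_mset (size P) h = X"
      "\<forall>Bk\<in>#P. sum_mset Bk = H - h" using P.good_X by blast
    have sP: "size P = m" using P(1) by (simp add: M_def)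
    have "sum_mset P + (replicate_mset m (-H) + replicate_mset m h) = A + (replicate_mset m (-H) + replicate_mset m h)"
      using P(2) sP Xdef by (simp add: ac_simps)
    then have "sum_mset P = A" by simp
    moreover have "\<forall>Bk\<in>#P. sum_mset Bk = L" using P(3) Hdef0 by simp
    ultimately show ?thesis unfolding three_partition_pos_def using sP by blast
  qed
  have dir2: "cost T = int m * (H + h)" if tp: "three_partition_pos A m L"
  proof -
    obtain P where P: "size P = m" "sum_mset P = A" "\<forall>Bk\<in>#P. sum_mset Bk = L"
      using tp unfolding three_partition_pos_def by blast
    have AX: "A \<subseteq># X" using Xdef by simp
    have bl: "\<forall>Bk\<in>#P. \<exists>x y z. Bk = {#x,y,z#} \<and> 0 \<le> y+z \<and> y+z \<le> H \<and> x+y+z = H - h"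
    proof
      fix Bk assume Bk: "Bk \<in># P"
      obtain P0 where P0: "P = add_mset Bk P0" using multi_member_split[OF Bk] by (elim exE)
      have sP0: "sum_mset P = Bk + sum_mset P0" unfolding P0 by simp
      have A': "A = Bk + sum_mset P0" using P(2)[symmetric] sP0 by (rule trans)
      have BkA: "Bk \<subseteq># A" unfolding A' by (rule mset_subset_eq_add_left)
      have sub: "Bk \<subseteq># X" by (rule subset_mset.order_trans[OF BkA AX])
      have allA: "\<forall>x\<in>#Bk. P.isA x"
      proof
        fix x assume "x \<in># Bk"
        then have xA: "x \<in># A" by (rule mset_subset_eqD[OF BkA])
        show "P.isA x" unfolding P.isA_def using AnH[OF xA] by simp
      qed
      have "sum_mset Bk = L" using P(3) Bk by blast
      then have sB: "sum_mset Bk = H - h" using Hdef0 by simp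
      show "\<exists>x y z. Bk = {#x,y,z#} \<and> 0 \<le> y+z \<and> y+z \<le> H \<and> x+y+z = H - h"
        by (rule P.block3[OF sub allA sB])
    qed
    have ne: "P \<noteq> {#}" using P(1) m0 by auto
    have h0: "h \<ge> 0" using hpos by simp
    obtain T' where T': "leaves T' = sum_mset P + replicate_mset (size P) (-H) + replicate_mset (size P) h"
      "cost T' = int (size P) * (H + h)" using build[OF h0 ne bl] by blast
    have "leaves T' = X" unfolding T'(1) P(1) P(2) Xdef ..
    then have "addition_tree_over T' X" by (simp add: addition_tree_over_def)
    then have "cost T \<le> cost T'" using Tmin unfolding min_cost_tree_def by blast
    moreover have "cost T' = int m * (H + h)" using T'(2) P(1) by simp
    ultimately show ?thesis using part1 by linarith
  qed
  show ?thesis using part1 dir1 dir2 by blast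
qed

end
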